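(* Let $G=(V,P,d)$ be a reversible metric Markov chain, $f\in\mathbb R^V$, and $\phi:I\to\mathbb R$ a concave, three times differentiable function on an open interval $I$ containing $f(V)$. Let $x\in V$ and assume $\phi'''(s)\ge0$ whenever $\min_{y\sim x}f(y)<s<f(x)$. Then \[ \Delta(\phi\circ f)(x)\le\phi'(f(x))\,\Delta f(x)+\frac{P_0}{2}\,\phi''(f(x))\,(\nabla_-f(x))^2 . \]
   Context: $V$ finite; $P:V\times V\to[0,\infty)$ with symmetric support; $x\sim y$ iff $x\neq y$ and $P(x,y)>0$; $d$ is a path distance ($d(x,y)=\inf$ of $\sum d(x_{k-1},x_k)$ over paths $x=x_0\sim\dots\sim x_n=y$), finite; there is a probability $m$ with $m(x)P(x,y)=m(y)P(y,x)$. $\Delta f(x)=\sum_yP(x,y)(f(y)-f(x))$. $P_0=\inf_{x\sim y}P(x,y)d(x,y)^2$. $\nabla_-f(x)=\max_{y\sim x}\frac{(f(y)-f(x))_-}{d(x,y)}$, where $s_-=\max(-s,0)$. *)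

theory Defs
  imports "HOL-Analysis.Analysis"
begin

definition adj :: "('a \<Rightarrow> 'a \<Rightarrow> real) \<Rightarrow> 'a \<Rightarrow> 'a \<Rightarrow> bool" where
  "adj P x y \<longleftrightarrow> x \<noteq> y \<and> P x y > 0"

definition walk :: "('a \<Rightarrow> 'a \<Rightarrow> real) \<Rightarrow> 'a \<Rightarrow> 'a \<Rightarrow> 'a list \<Rightarrow> bool" where
  "walk P x y xs \<longleftrightarrow> xs \<noteq> [] \<and> hd xs = x \<and> last xs = y \<and>
     (\<forall>i. Suc i < length xs \<longrightarrow> adj P (xs ! i) (xs ! Suc i))"

definition walk_length :: "('a \<Rightarrow> 'a \<Rightarrow> real) \<Rightarrow> 'a list \<Rightarrow> real" where
  "walk_length d xs = (\<Sum>i<length xs - 1. d (xs ! i) (xs ! Suc i))"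

text \<open>Reversible metric Markov chain (V,P,d) with V = UNIV :: 'a set finite.\<close>
definition rev_metric_markov_chain ::
  "('a::finite \<Rightarrow> 'a \<Rightarrow> real) \<Rightarrow> ('a \<Rightarrow> 'a \<Rightarrow> real) \<Rightarrow> bool" where
  "rev_metric_markov_chain P d \<longleftrightarrow>
     (\<forall>x y. P x y \<ge> 0) \<and>
     (\<forall>x y. P x y > 0 \<longleftrightarrow> P y x > 0) \<and>
     (\<forall>x y. d x y = d y x) \<and>
     (\<forall>x y. x \<noteq> y \<longrightarrow> d x y > 0) \<and>
     (\<forall>x y. {xs. walk P x y xs} \<noteq> {} \<and>
            d x y = Inf (walk_length d ` {xs. walk P x y xs})) \<and>
     (\<exists>m::'a \<Rightarrow> real. (\<forall>x. m x \<ge> 0) \<and> (\<Sum>x\<in>UNIV. m x) = 1 \<and>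
        (\<forall>x y. m x * P x y = m y * P y x))"

definition laplacian :: "('a::finite \<Rightarrow> 'a \<Rightarrow> real) \<Rightarrow> ('a \<Rightarrow> real) \<Rightarrow> 'a \<Rightarrow> real" where
  "laplacian P f x = (\<Sum>y\<in>UNIV. P x y * (f y - f x))"

definition P0 :: "('a \<Rightarrow> 'a \<Rightarrow> real) \<Rightarrow> ('a \<Rightarrow> 'a \<Rightarrow> real) \<Rightarrow> real" where
  "P0 P d = Inf {P x y * (d x y)\<^sup>2 | x y. adj P x y}"

definition neg_part :: "real \<Rightarrow> real" where
  "neg_part s = max (- s) 0"

text \<open>Max over neighbours; with no neighbours the value is 0 (all terms are \<ge> 0).\<close>
definition grad_minus ::
  "('a::finite \<Rightarrow> 'a \<Rightarrow> real) \<Rightarrow> ('a \<Rightarrow> 'a \<Rightarrow> real) \<Rightarrow> ('a \<Rightarrow> real) \<Rightarrow> 'a \<Rightarrow> real" where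
  "grad_minus P d f x =
     Max (insert 0 {neg_part (f y - f x) / d x y | y. adj P x y})"

end

theory Submission
  imports Defs
begin

lemma tangent_conc:
  fixes \<phi> \<phi>1 :: "real \<Rightarrow> real"
  assumes "open I" "is_interval I" "concave_on I \<phi>"
    and "\<forall>s\<in>I. (\<phi> has_real_derivative \<phi>1 s) (at s)"
    and "c \<in> I" "y \<in> I"
  shows "\<phi> y - \<phi> c \<le> \<phi>1 c * (y - c)"
proof -
  have cv: "convex_on I (\<lambda>x. - \<phi> x)" using assms(3) by (simp add: concave_on_def)
  have der: "((\<lambda>x. - \<phi> x) has_field_derivative - \<phi>1 c) (at c within I)"
    by (rule has_field_derivative_at_within[OF DERIV_minus[OF bspec[OF assms(4) assms(5)]]])
  have ci: "c \<in> interior I" using assms(5) interior_open[OF assms(1)] by simp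
  have "(- \<phi> y) - (- \<phi> c) \<ge> (- \<phi>1 c) * (y - c)"
    by (rule convex_on_imp_above_tangent[OF cv is_interval_connected[OF assms(2)] ci assms(6) der])
  then show ?thesis by simp
qed

lemma second_nonpos:
  fixes \<phi> \<phi>1 \<phi>2 :: "real \<Rightarrow> real"
  assumes "open I" "is_interval I" "concave_on I \<phi>"
    and d1: "\<forall>s\<in>I. (\<phi> has_real_derivative \<phi>1 s) (at s)"
    and d2: "\<forall>s\<in>I. (\<phi>1 has_real_derivative \<phi>2 s) (at s)"
    and c: "c \<in> I"
  shows "\<phi>2 c \<le> 0"
proof (rule ccontr)
  assume "\<not> \<phi>2 c \<le> 0"
  then have "\<phi>2 c > 0" by simp
  from DERIV_pos_inc_right[OF d2[rule_format, OF c] this]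
  obtain dd where dd: "dd > 0" "\<forall>h>0. h < dd \<longrightarrow> \<phi>1 c < \<phi>1 (c + h)" by blast
  from assms(1) c obtain e where e: "e > 0" "ball c e \<subseteq> I" by (meson openE)
  define h where "h = min dd e / 2"
  have h: "h > 0" "h < dd" "h < e" using dd e by (auto simp: h_def)
  have ch: "c + h \<in> I" using e h by (auto simp: dist_norm intro!: subsetD[OF e(2)])
  have 1: "\<phi>1 c < \<phi>1 (c + h)" using dd h by auto
  have 2: "\<phi> (c+h) - \<phi> c \<le> \<phi>1 c * h"
    using tangent_conc[OF assms(1,2,3) d1 c ch] by simp
  have 3: "\<phi> c - \<phi> (c+h) \<le> \<phi>1 (c+h) * (- h)"
    using tangent_conc[OF assms(1,2,3) d1 ch c] by simp
  have "\<phi>1 (c+h) * h \<le> \<phi>1 c * h" using 2 3 by simp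
  then have "\<phi>1 (c+h) \<le> \<phi>1 c" using h(1) by simp
  then show False using 1 by simp
qed

theorem lemma5p2:
  fixes P d :: "'a::finite \<Rightarrow> 'a \<Rightarrow> real"
    and f :: "'a \<Rightarrow> real"
    and \<phi> \<phi>1 \<phi>2 \<phi>3 :: "real \<Rightarrow> real"
    and I :: "real set" and x :: 'a
  assumes G: "rev_metric_markov_chain P d"
    and I: "open I" "is_interval I" "range f \<subseteq> I"
    and conc: "concave_on I \<phi>"
    and d1: "\<forall>s\<in>I. (\<phi> has_real_derivative \<phi>1 s) (at s)"
    and d2: "\<forall>s\<in>I. (\<phi>1 has_real_derivative \<phi>2 s) (at s)"
    and d3: "\<forall>s\<in>I. (\<phi>2 has_real_derivative \<phi>3 s) (at s)"
    and third: "\<forall>s. (\<exists>y. adj P x y \<and> f y < s) \<and> s < f x \<longrightarrow> \<phi>3 s \<ge> 0"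
  shows "laplacian P (\<phi> \<circ> f) x
    \<le> \<phi>1 (f x) * laplacian P f x + P0 P d / 2 * \<phi>2 (f x) * (grad_minus P d f x)\<^sup>2"
proof -
  have Pnn: "\<And>a b. P a b \<ge> 0" and dpos: "\<And>a b. a \<noteq> b \<Longrightarrow> d a b > 0"
    using G by (auto simp: rev_metric_markov_chain_def)
  have fI: "\<And>y. f y \<in> I" using I(3) by auto
  have neg2: "\<phi>2 (f x) \<le> 0"
    using second_nonpos[OF I(1,2) conc d1 d2 fI] .
  define g where "g y = \<phi>1 (f x) * (f y - f x) + \<phi>2 (f x) / 2 * (neg_part (f y - f x))\<^sup>2" for y
  have termb: "P x y * (\<phi> (f y) - \<phi> (f x)) \<le> P x y * g y" for y
  proof (cases "f y \<ge> f x")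
    case True
    have "\<phi> (f y) - \<phi> (f x) \<le> g y"
      using tangent_conc[OF I(1,2) conc d1 fI[of x] fI[of y]] True
      by (simp add: g_def neg_part_def)
    then show ?thesis using Pnn by (simp add: mult_left_mono)
  next
    case False
    show ?thesis
    proof (cases "adj P x y")
      case False
      then have "P x y = 0 \<or> y = x" using Pnn[of x y] by (auto simp: adj_def)
      then show ?thesis by (auto simp: g_def neg_part_def)
    next
      case adj: True
      have seg: "f y \<le> t \<Longrightarrow> t \<le> f x \<Longrightarrow> t \<in> I" for t
        by (rule mem_is_interval_1_I[OF I(2) fI[of y] fI[of x]])
      define D where "D = (\<lambda>m::nat. if m = 0 then \<phi> else if m = 1 then \<phi>1 else if m = 2 then \<phi>2 else \<phi>3)"
      have "\<exists>t. (if f y < f x then f y < t \<and> t < f x else f x < t \<and> t < f y) \<and>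
          \<phi> (f y) = (\<Sum>m<3. (D m (f x) / fact m) * (f y - f x)^m) + (D 3 t / fact 3) * (f y - f x)^3"
      proof (rule Taylor[where a = "f y" and b = "f x"])
        show "\<forall>m t. m < 3 \<and> f y \<le> t \<and> t \<le> f x \<longrightarrow> DERIV (D m) t :> D (Suc m) t"
        proof (intro allI impI)
          fix m t assume mt: "m < (3::nat) \<and> f y \<le> t \<and> t \<le> f x"
          then have tI: "t \<in> I" using seg by auto
          from mt have "m = 0 \<or> m = 1 \<or> m = 2" by auto
          then show "DERIV (D m) t :> D (Suc m) t"
            using d1 d2 d3 tI by (auto simp: D_def)
        qed
      qed (use False in \<open>simp_all add: D_def\<close>)
      then obtain t where t: "f y < t" "t < f x"
        and eq: "\<phi> (f y) = (\<Sum>m<3. (D m (f x) / fact m) * (f y - f x)^m) + (D 3 t / fact 3) * (f y - f x)^3"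
        using False by auto
      have p3: "\<phi>3 t \<ge> 0" using third adj t by blast
      have cube: "(f y - f x)^3 \<le> 0" using False by (simp add: power_le_zero_eq)
      have r: "\<phi>3 t / 6 * (f y - f x)^3 \<le> 0"
        using p3 cube by (simp add: mult_nonneg_nonpos)
      have sumeq: "(\<Sum>m<3. (D m (f x) / fact m) * (f y - f x)^m)
          = \<phi> (f x) + \<phi>1 (f x) * (f y - f x) + \<phi>2 (f x) / 2 * (f y - f x)^2"
        by (simp add: D_def numeral_3_eq_3 lessThan_Suc fact_numeral eval_nat_numeral)
      have d3e: "D 3 t / fact 3 = \<phi>3 t / 6" by (simp add: D_def fact_numeral)
      have r2: "D 3 t / fact 3 * (f y - f x)^3 \<le> 0" using r unfolding d3e by simp
      have negeq: "(neg_part (f y - f x))\<^sup>2 = (f y - f x)^2"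
        using False by (simp add: neg_part_def power2_commute)
      have gy: "g y = \<phi>1 (f x) * (f y - f x) + \<phi>2 (f x) / 2 * (f y - f x)^2"
        unfolding g_def negeq ..
      have "\<phi> (f y) - \<phi> (f x) \<le> g y"
        using eq r2 sumeq gy by linarith
      then show ?thesis using Pnn by (simp add: mult_left_mono)
    qed
  qed
  have L: "laplacian P (\<phi> \<circ> f) x \<le> (\<Sum>y\<in>UNIV. P x y * g y)"
    unfolding laplacian_def o_def by (rule sum_mono) (rule termb)
  have split: "(\<Sum>y\<in>UNIV. P x y * g y) = \<phi>1 (f x) * laplacian P f x
      + \<phi>2 (f x) / 2 * (\<Sum>y\<in>UNIV. P x y * (neg_part (f y - f x))\<^sup>2)"
  proof -
    have "(\<Sum>y\<in>UNIV. P x y * g y) = (\<Sum>y\<in>UNIV. \<phi>1 (f x) * (P x y * (f y - f x)) + \<phi>2 (f x) / 2 * (P x y * (neg_part (f y - f x))\<^sup>2))"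
      by (rule sum.cong) (auto simp: g_def algebra_simps)
    then show ?thesis by (simp add: laplacian_def sum.distrib sum_distrib_left)
  qed
  define S where "S = {neg_part (f y - f x) / d x y | y. adj P x y}"
  have finS: "finite S" unfolding S_def
    by (rule finite_subset[of _ "range (\<lambda>y. neg_part (f y - f x) / d x y)"]) auto
  have key: "P0 P d * (grad_minus P d f x)\<^sup>2 \<le> (\<Sum>y\<in>UNIV. P x y * (neg_part (f y - f x))\<^sup>2)"
  proof -
    have nn: "\<And>y. 0 \<le> P x y * (neg_part (f y - f x))\<^sup>2" using Pnn by simp
    have gm: "grad_minus P d f x \<in> insert 0 S"
      unfolding grad_minus_def S_def[symmetric] using finS by (intro Max_in) auto
    show ?thesis
    proof (cases "grad_minus P d f x = 0")
      case True then show ?thesis using nn by (simp add: sum_nonneg)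
    next
      case False
      with gm have "grad_minus P d f x \<in> S" by simp
      then obtain y where y: "adj P x y" "grad_minus P d f x = neg_part (f y - f x) / d x y"
        unfolding S_def by blast
      have dxy: "d x y > 0" using y(1) dpos by (auto simp: adj_def)
      define T where "T = {P a b * (d a b)\<^sup>2 | a b. adj P a b}"
      have finT: "finite T" unfolding T_def
      proof (rule finite_subset[of _ "(\<lambda>p. P (fst p) (snd p) * (d (fst p) (snd p))\<^sup>2) ` UNIV"])
        show "{P a b * (d a b)\<^sup>2 | a b. adj P a b} \<subseteq> (\<lambda>p. P (fst p) (snd p) * (d (fst p) (snd p))\<^sup>2) ` UNIV"
        proof
          fix z assume "z \<in> {P a b * (d a b)\<^sup>2 | a b. adj P a b}"
          then obtain a b where "z = P a b * (d a b)\<^sup>2" by blast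
          then show "z \<in> (\<lambda>p. P (fst p) (snd p) * (d (fst p) (snd p))\<^sup>2) ` UNIV"
            by (intro image_eqI[where x="(a,b)"]) auto
        qed
      qed simp
      have inT: "P x y * (d x y)\<^sup>2 \<in> T" using y(1) unfolding T_def by blast
      have bT: "bdd_below T" using finT by (rule bdd_below_finite)
      have "P0 P d \<le> P x y * (d x y)\<^sup>2"
        unfolding P0_def T_def[symmetric] using cInf_lower[OF inT bT] .
      then have "P0 P d * (grad_minus P d f x)\<^sup>2 \<le> P x y * (d x y)\<^sup>2 * (grad_minus P d f x)\<^sup>2"
        by (rule mult_right_mono) simp
      also have "\<dots> = P x y * (neg_part (f y - f x))\<^sup>2"
        using y(2) dxy by (simp add: power_divide)
      also have "\<dots> \<le> (\<Sum>y\<in>UNIV. P x y * (neg_part (f y - f x))\<^sup>2)"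
        using nn by (intro member_le_sum) auto
      finally show ?thesis .
    qed
  qed
  have "\<phi>2 (f x) / 2 * (\<Sum>y\<in>UNIV. P x y * (neg_part (f y - f x))\<^sup>2)
      \<le> \<phi>2 (f x) / 2 * (P0 P d * (grad_minus P d f x)\<^sup>2)"
    using key neg2 by (intro mult_left_mono_neg) auto
  moreover have "\<phi>2 (f x) / 2 * (P0 P d * (grad_minus P d f x)\<^sup>2) = P0 P d / 2 * \<phi>2 (f x) * (grad_minus P d f x)\<^sup>2"
    by simp
  ultimately show ?thesis using L split by linarith
qed

end
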